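(* Let $\delta:\mathbb{R}_+\to\mathbb{R}_+\cup\{+\infty\}$ satisfy $\delta(t)>0$ for $t>0$ and $t\mapsto\delta(t)/t$ non-decreasing, and let $M_\delta=\int_0^\infty e^{-\delta(t)}dt$. Let $\sigma$ be a probability measure on $\mathbb{R}$ with density $e^{-g}$, where $g:\mathbb{R}\to\mathbb{R}\cup\{+\infty\}$ is convex, attains its minimum at $0$, and satisfies $g(x)-g(0)\ge\delta(|x|)$ for all $x\in\mathbb{R}$. Then for every Borel $A\subset\mathbb{R}$, $$\sigma^+(A)\ \ge\ C_\delta\,\widetilde{\sigma(A)}\,\gamma\Big(\log\frac{1}{\widetilde{\sigma(A)}}\Big),\qquad C_\delta=\frac{e-1}{2e\max(\delta(M_\delta),1)},\quad \gamma(t)=\frac{t}{\delta^{-1}(t)}.$$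
   Context: $\sigma^+(A)=\liminf_{\varepsilon\to0^+}\frac{\sigma(A_\varepsilon)-\sigma(A)}{\varepsilon}$ with $A_\varepsilon=\{x:\exists y\in A,|x-y|<\varepsilon\}$; $\widetilde{\sigma(A)}=\min(\sigma(A),1-\sigma(A))$; $\delta^{-1}(s)=\sup\{t\ge0:\delta(t)\le s\}$. *)

theory Defs
  imports "HOL-Probability.Probability"
begin

text \<open>Extended-real-valued convex function (values in real \<union> {+\<infinity>}); convention 0 * \<infinity> = 0.\<close>
definition ereal_convex :: "(real \<Rightarrow> ereal) \<Rightarrow> bool" where
  "ereal_convex g \<longleftrightarrow> (\<forall>x y t. 0 \<le> t \<and> t \<le> 1 \<longrightarrow>
      g ((1 - t) * x + t * y) \<le> ereal (1 - t) * g x + ereal t * g y)"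

definition exp_neg :: "ereal \<Rightarrow> real" where
  "exp_neg v = (if v = \<infinity> then 0 else exp (- real_of_ereal v))"

definition nbhd :: "real set \<Rightarrow> real \<Rightarrow> real set" where
  "nbhd A \<epsilon> = {x. \<exists>y\<in>A. \<bar>x - y\<bar> < \<epsilon>}"

definition boundary_measure :: "real measure \<Rightarrow> real set \<Rightarrow> ereal" where
  "boundary_measure \<sigma> A =
     Liminf (at_right 0) (\<lambda>\<epsilon>. ereal ((measure \<sigma> (nbhd A \<epsilon>) - measure \<sigma> A) / \<epsilon>))"

definition M_delta :: "(real \<Rightarrow> ereal) \<Rightarrow> real" where
  "M_delta \<delta> = (LBINT t:{0..}. exp_neg (\<delta> t))"

definition delta_inv :: "(real \<Rightarrow> ereal) \<Rightarrow> real \<Rightarrow> ereal" where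
  "delta_inv \<delta> s = Sup {ereal t | t. t \<ge> 0 \<and> \<delta> t \<le> ereal s}"

definition gamma_fun :: "(real \<Rightarrow> ereal) \<Rightarrow> real \<Rightarrow> ereal" where
  "gamma_fun \<delta> t = ereal t / delta_inv \<delta> t"

definition C_delta :: "(real \<Rightarrow> ereal) \<Rightarrow> ereal" where
  "C_delta \<delta> = ereal ((exp 1 - 1) / (2 * exp 1)) / max (\<delta> (M_delta \<delta>)) 1"

end

theory Submission
  imports Defs
begin



lemma strip_exists:
  fixes A :: "real set"
  assumes "a1 \<le> a2" "\<epsilon> > 0" "x \<in> {a1..a2}" "x \<notin> nbhd A \<epsilon>" "y \<in> A" "y \<in> {a1..a2}"
  shows "\<exists>c. {c<..<c+\<epsilon>} \<subseteq> {a1..a2} \<inter> (nbhd A \<epsilon> - A)"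
proof -
  have far: "\<And>a. a \<in> A \<Longrightarrow> \<bar>x - a\<bar> \<ge> \<epsilon>" using assms(4) unfolding nbhd_def by force
  show ?thesis
  proof (cases "y > x")
    case True
    define S where "S = A \<inter> {x..a2}"
    have yS: "y \<in> S" using True assms S_def by auto
    have bdd: "bdd_below S" unfolding S_def by (rule bdd_belowI[of _ x]) auto
    define z where "z = Inf S"
    have zy: "z \<le> y" using cInf_lower[OF yS bdd] z_def by simp
    have Sge: "\<And>a. a \<in> S \<Longrightarrow> a \<ge> x + \<epsilon>" using far S_def by force
    have zx: "z \<ge> x + \<epsilon>" unfolding z_def using yS by (intro cInf_greatest) (auto intro: Sge)
    show ?thesis
    proof (rule exI[of _ "z - \<epsilon>"], intro subsetI)
      fix w assume w: "w \<in> {z - \<epsilon><..<z - \<epsilon> + \<epsilon>}"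
      have "w \<ge> a1" "w \<le> a2" using w zx zy assms by auto
      moreover have "w \<notin> A"
      proof
        assume "w \<in> A"
        then have "w \<in> S" using w zx zy assms S_def by auto
        then have "z \<le> w" using cInf_lower[OF _ bdd] z_def by simp
        then show False using w by simp
      qed
      moreover have "w \<in> nbhd A \<epsilon>"
      proof -
        have "Inf S < w + \<epsilon>" using w z_def by simp
        then obtain a where a: "a \<in> S" "a < w + \<epsilon>" using cInf_lessD[of S] yS by blast
        have "a \<ge> z" using cInf_lower[OF a(1) bdd] z_def by simp
        then have "\<bar>w - a\<bar> < \<epsilon>" using a w by auto
        then show ?thesis using a S_def unfolding nbhd_def by auto
      qed
      ultimately show "w \<in> {a1..a2} \<inter> (nbhd A \<epsilon> - A)" by auto
    qed
  next
    case False
    have "y \<noteq> x" using far assms by force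
    then have yx: "y < x" using False by simp
    define S where "S = A \<inter> {a1..x}"
    have yS: "y \<in> S" using yx assms S_def by auto
    have bdd: "bdd_above S" unfolding S_def by (rule bdd_aboveI[of _ x]) auto
    define z where "z = Sup S"
    have zy: "z \<ge> y" using cSup_upper[OF yS bdd] z_def by simp
    have Sle: "\<And>a. a \<in> S \<Longrightarrow> a \<le> x - \<epsilon>" using far S_def by force
    have zx: "z \<le> x - \<epsilon>" unfolding z_def using yS by (intro cSup_least) (auto intro: Sle)
    show ?thesis
    proof (rule exI[of _ "z"], intro subsetI)
      fix w assume w: "w \<in> {z<..<z + \<epsilon>}"
      have "w \<ge> a1" "w \<le> a2" using w zx zy assms by auto
      moreover have "w \<notin> A"
      proof
        assume "w \<in> A"
        then have "w \<in> S" using w zx zy assms S_def by auto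
        then have "w \<le> z" using cSup_upper[OF _ bdd] z_def by simp
        then show False using w by simp
      qed
      moreover have "w \<in> nbhd A \<epsilon>"
      proof -
        have "w - \<epsilon> < Sup S" using w z_def by simp
        then obtain a where a: "a \<in> S" "w - \<epsilon> < a" using less_cSupD[of S] yS by blast
        have "a \<le> z" using cSup_upper[OF a(1) bdd] z_def by simp
        then have "\<bar>w - a\<bar> < \<epsilon>" using a w by auto
        then show ?thesis using a S_def unfolding nbhd_def by auto
      qed
      ultimately show "w \<in> {a1..a2} \<inter> (nbhd A \<epsilon> - A)" by auto
    qed
  qed
qed

lemma nbhd_open: "open (nbhd A e)"
proof -
  have "nbhd A e = (\<Union>y\<in>A. ball y e)" unfolding nbhd_def ball_def dist_real_def by (auto simp: abs_minus_commute)
  then show ?thesis by auto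
qed

lemma nbhd_sets[measurable]: "nbhd A e \<in> sets borel"
  using nbhd_open by auto

lemma subset_nbhd: "e > 0 \<Longrightarrow> A \<subseteq> nbhd A e"
  unfolding nbhd_def by force


lemma strip_measure:
  fixes f :: "real \<Rightarrow> real"
  assumes sig: "\<sigma> = density lborel (\<lambda>x. ennreal (f x))" and prob: "prob_space \<sigma>"
    and fm: "f \<in> borel_measurable borel"
    and m: "m \<ge> 0" "\<And>y. y \<in> {c<..<c+e} \<Longrightarrow> m \<le> f y" and e: "e > 0"
  shows "m * e \<le> measure \<sigma> {c<..<c+e}"
proof -
  interpret prob_space \<sigma> by (rule prob)
  have "emeasure \<sigma> {c<..<c+e} = (\<integral>\<^sup>+x. ennreal (f x) * indicator {c<..<c+e} x \<partial>lborel)"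
    unfolding sig by (subst emeasure_density) (auto simp: fm measurable_compose[OF fm])
  also have "\<dots> \<ge> (\<integral>\<^sup>+x. ennreal m * indicator {c<..<c+e} x \<partial>lborel)"
    by (intro nn_integral_mono) (auto simp: indicator_def m ennreal_leI)
  also have "(\<integral>\<^sup>+x. ennreal m * indicator {c<..<c+e} x \<partial>lborel) = ennreal (m * e)"
    using e m by (subst nn_integral_cmult_indicator) (auto simp: ennreal_mult)
  finally have "ennreal (m * e) \<le> ennreal (measure \<sigma> {c<..<c+e})"
    by (simp add: emeasure_eq_measure)
  then show ?thesis using ennreal_le_iff measure_nonneg by blast
qed

lemma bnd_lower:
  fixes f :: "real \<Rightarrow> real"
  assumes sig: "\<sigma> = density lborel (\<lambda>x. ennreal (f x))" and prob: "prob_space \<sigma>"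
    and fm: "f \<in> borel_measurable borel" and A: "A \<in> sets borel"
    and a12: "a1 \<le> a2"
    and m: "m \<ge> 0" "\<And>y. y \<in> {a1..a2} \<Longrightarrow> m \<le> f y"
    and K1: "measure \<sigma> {a1..a2} > measure \<sigma> A" and K2: "measure \<sigma> {a1..a2} > 1 - measure \<sigma> A"
  shows "ereal m \<le> boundary_measure \<sigma> A"
proof -
  interpret prob_space \<sigma> by (rule prob)
  have sets_eq: "sets \<sigma> = sets borel" unfolding sig by simp
  have A\<sigma>: "A \<in> sets \<sigma>" using A sets_eq by simp
  define p where "p = measure \<sigma> A"
  define K where "K = {a1..a2}"
  have K\<sigma>: "K \<in> sets \<sigma>" using sets_eq K_def by simp
  define d where "d = measure \<sigma> K - p"
  have d: "d > 0" using K1 d_def p_def K_def by simp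
  have AK: "A \<inter> K \<noteq> {}"
  proof
    assume "A \<inter> K = {}"
    then have "A \<subseteq> space \<sigma> - K" using sets.sets_into_space[OF A\<sigma>] by auto
    then have "p \<le> measure \<sigma> (space \<sigma> - K)" unfolding p_def
      using finite_measure_mono K\<sigma> by blast
    also have "\<dots> = 1 - measure \<sigma> K" using prob_compl[OF K\<sigma>] by simp
    finally show False using K2 K_def p_def by simp
  qed
  then obtain y where y: "y \<in> A" "y \<in> K" by blast
  have key: "ereal m \<le> ereal ((measure \<sigma> (nbhd A e) - measure \<sigma> A) / e)"
    if e: "0 < e" "e < d / (m + 1)" for e
  proof -
    have N\<sigma>: "nbhd A e \<in> sets \<sigma>" using sets_eq by simp
    have AN: "A \<subseteq> nbhd A e" using subset_nbhd e by simp
    show ?thesis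
    proof (cases "K \<subseteq> nbhd A e")
      case True
      have "measure \<sigma> K \<le> measure \<sigma> (nbhd A e)" using finite_measure_mono[OF True N\<sigma>] .
      then have "d \<le> measure \<sigma> (nbhd A e) - measure \<sigma> A" using d_def p_def by simp
      moreover have "m * e \<le> d"
      proof -
        have "e * (m + 1) < d" using e m by (simp add: field_simps)
        then show ?thesis using e m by (simp add: algebra_simps)
      qed
      ultimately have "m * e \<le> measure \<sigma> (nbhd A e) - measure \<sigma> A" by simp
      then show ?thesis using e by (simp add: field_simps)
    next
      case False
      then obtain x where x: "x \<in> K" "x \<notin> nbhd A e" by blast
      obtain c where c: "{c<..<c+e} \<subseteq> {a1..a2} \<inter> (nbhd A e - A)"
        using strip_exists[OF a12 e(1), of x A y] x y K_def by auto
      have "m * e \<le> measure \<sigma> {c<..<c+e}"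
        by (rule strip_measure[OF sig prob fm m(1) _ e(1)]) (use c m in auto)
      also have "\<dots> \<le> measure \<sigma> (nbhd A e - A)"
        by (rule finite_measure_mono) (use c N\<sigma> A\<sigma> in auto)
      also have "\<dots> = measure \<sigma> (nbhd A e) - measure \<sigma> A"
        by (rule finite_measure_Diff[OF N\<sigma> A\<sigma> AN])
      finally show ?thesis using e by (simp add: field_simps)
    qed
  qed
  have "d / (m + 1) > 0" using d m by simp
  then have "eventually (\<lambda>e. ereal m \<le> ereal ((measure \<sigma> (nbhd A e) - measure \<sigma> A) / e)) (at_right 0)"
    unfolding eventually_at_right_field using key by blast
  then show ?thesis unfolding boundary_measure_def by (rule Liminf_bounded)
qed

lemma bnd_nonneg:
  assumes sig: "\<sigma> = density lborel f" and prob: "prob_space \<sigma>" and A: "A \<in> sets borel"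
  shows "0 \<le> boundary_measure \<sigma> A"
proof -
  interpret prob_space \<sigma> by (rule prob)
  have sets_eq: "sets \<sigma> = sets borel" unfolding sig by simp
  have "ereal 0 \<le> ereal ((measure \<sigma> (nbhd A e) - measure \<sigma> A) / e)" if "0 < e" for e
  proof -
    have "measure \<sigma> A \<le> measure \<sigma> (nbhd A e)"
      by (rule finite_measure_mono) (use subset_nbhd[OF that] sets_eq in auto)
    then show ?thesis using that by simp
  qed
  then have "eventually (\<lambda>e. ereal 0 \<le> ereal ((measure \<sigma> (nbhd A e) - measure \<sigma> A) / e)) (at_right 0)"
    unfolding eventually_at_right_field by (intro exI[of _ 1]) auto
  then show ?thesis unfolding boundary_measure_def zero_ereal_def by (rule Liminf_bounded)
qed




lemma exp_neg_nonneg: "0 \<le> exp_neg v" unfolding exp_neg_def by auto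

lemma exp_neg_le1: "v \<ge> 0 \<Longrightarrow> exp_neg v \<le> 1"
  unfolding exp_neg_def by (cases v) auto

lemma exp_neg_fin: "v = ereal r \<Longrightarrow> exp_neg v = exp (- r)"
  unfolding exp_neg_def by auto

lemma exp_neg_anti: "u \<noteq> -\<infinity> \<Longrightarrow> u \<le> v \<Longrightarrow> exp_neg v \<le> exp_neg u"
  unfolding exp_neg_def by (cases u; cases v) auto

lemma exp_neg_meas[measurable]: "exp_neg \<in> borel_measurable borel"
  unfolding exp_neg_def by measurable

lemma conv_fin:
  assumes conv: "ereal_convex g" and gx: "g x = ereal a" and gy: "g y = ereal b" and t: "0 \<le> t" "t \<le> 1"
  shows "g ((1 - t) * x + t * y) \<le> ereal ((1 - t) * a + t * b)"
  using conv t gx gy unfolding ereal_convex_def by (metis plus_ereal.simps(1) times_ereal.simps(1))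

lemma conv_quasi:
  assumes conv: "ereal_convex g" and ab: "a \<le> y" "y \<le> b"
  shows "g y \<le> max (g a) (g b)"
proof (cases "g a = \<infinity> \<or> g b = \<infinity>")
  case True then show ?thesis by auto
next
  case False
  show ?thesis
  proof (cases "a = b")
    case True then show ?thesis using ab by auto
  next
    case False
    obtain ra rb where r: "g a = ereal ra \<or> g a = -\<infinity>" "g b = ereal rb \<or> g b = -\<infinity>"
      using \<open>\<not> (g a = \<infinity> \<or> g b = \<infinity>)\<close> by (metis ereal_cases)
    define t where "t = (y - a) / (b - a)"
    have t: "0 \<le> t" "t \<le> 1" using ab False by (auto simp: t_def field_simps)
    have "t * (b - a) = y - a" using False by (simp add: t_def)
    then have y: "y = (1 - t) * a + t * b" by (simp add: algebra_simps)
    have "g y \<le> ereal (1 - t) * g a + ereal t * g b"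
      using conv t unfolding ereal_convex_def y by blast
    also have "\<dots> \<le> ereal (1 - t) * max (g a) (g b) + ereal t * max (g a) (g b)"
      using t by (intro add_mono ereal_mult_left_mono) auto
    also have "\<dots> = max (g a) (g b)"
    proof -
      have "max (g a) (g b) \<noteq> \<infinity>" using \<open>\<not> (g a = \<infinity> \<or> g b = \<infinity>)\<close> by (simp add: max_def)
      then obtain z where "max (g a) (g b) = ereal z \<or> max (g a) (g b) = -\<infinity>" by (metis ereal_cases)
      then show ?thesis using t
        by (cases "t = 0"; cases "t = 1") (auto simp: algebra_simps)
    qed
    finally show ?thesis .
  qed
qed


lemma f_quasi:
  assumes conv: "ereal_convex g" and nm: "\<And>x. g x \<noteq> -\<infinity>" and ab: "a \<le> y" "y \<le> b"
  shows "min (exp_neg (g a)) (exp_neg (g b)) \<le> exp_neg (g y)"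
proof -
  have "g y \<le> max (g a) (g b)" by (rule conv_quasi[OF conv ab])
  then have "exp_neg (max (g a) (g b)) \<le> exp_neg (g y)" by (rule exp_neg_anti[OF nm])
  moreover have "exp_neg (max (g a) (g b)) = min (exp_neg (g a)) (exp_neg (g b))"
    using exp_neg_anti[OF nm, of a "g b"] exp_neg_anti[OF nm, of b "g a"]
    by (cases "g a \<le> g b") (auto simp: max_def min_def)
  ultimately show ?thesis by simp
qed

lemma f_meas:
  assumes conv: "ereal_convex g" and nm: "\<And>x. g x \<noteq> -\<infinity>"
  shows "(\<lambda>x. exp_neg (g x)) \<in> borel_measurable borel"
proof (rule borel_measurableI_greater)
  fix c :: real
  have "is_interval {x. c < exp_neg (g x)}"
    unfolding is_interval_1
  proof (intro ballI allI impI)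
    fix a b x assume "a \<in> {x. c < exp_neg (g x)}" "b \<in> {x. c < exp_neg (g x)}" "a \<le> x \<and> x \<le> b"
    then show "x \<in> {x. c < exp_neg (g x)}" using f_quasi[OF conv nm, of a x b] by auto
  qed
  then show "{x \<in> space borel. c < exp_neg (g x)} \<in> sets borel"
    using real_interval_borel_measurable by simp
qed

lemma g_fin_below:
  assumes conv: "ereal_convex g" and g0: "g 0 = ereal g0" and x: "0 \<le> x" "x \<le> y" and gy: "g y = ereal b"
  shows "g x \<le> ereal ((1 - x / y) * g0 + (x / y) * b)"
proof (cases "y = 0")
  case True then show ?thesis using x g0 by auto
next
  case False
  then have "x = (1 - x / y) * 0 + (x / y) * y" by simp
  moreover have "0 \<le> x / y" "x / y \<le> 1" using x False by auto
  ultimately show ?thesis using conv_fin[OF conv g0 gy] by metis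
qed

lemma g_fin_prop:
  assumes conv: "ereal_convex g" and nm: "\<And>x. g x \<noteq> -\<infinity>" and g0: "g 0 = ereal g0"
    and x: "0 \<le> x" "x \<le> y" and gy: "g y \<noteq> \<infinity>"
  shows "g x \<noteq> \<infinity>"
proof -
  obtain b where "g y = ereal b" using gy nm by (cases "g y") auto
  from g_fin_below[OF conv g0 x this] show ?thesis by auto
qed

lemma hazard_pt:
  assumes conv: "ereal_convex g" and nm: "\<And>x. g x \<noteq> -\<infinity>" and g0: "g 0 = ereal g0"
    and x: "0 < x" "x \<le> y" and gx: "g x = ereal gx"
  shows "exp_neg (g y) \<le> exp (- gx) * exp (- ((gx - g0) / x) * (y - x))"
proof (cases "g y = \<infinity>")
  case True then show ?thesis by (simp add: exp_neg_def)
next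
  case False
  then obtain gy where gy: "g y = ereal gy" using nm by (cases "g y") auto
  have y0: "y > 0" using x by simp
  have "ereal gx \<le> ereal ((1 - x / y) * g0 + (x / y) * gy)"
    using g_fin_below[OF conv g0 _ x(2) gy] x gx by simp
  then have "gx \<le> (1 - x / y) * g0 + (x / y) * gy" by simp
  moreover have "(x/y)*(gy-g0) = (x/y)*gy - (x/y)*g0" by (simp add: right_diff_distrib)
  moreover have "(1 - x/y)*g0 = g0 - (x/y)*g0" by (simp add: left_diff_distrib)
  ultimately have "gx - g0 \<le> (x / y) * (gy - g0)" by linarith
  then have "(y / x) * (gx - g0) \<le> (y / x) * ((x / y) * (gy - g0))"
    using x y0 by (intro mult_left_mono) auto
  also have "\<dots> = gy - g0" using x y0 by simp
  finally have h: "(y / x) * (gx - g0) \<le> gy - g0" .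
  have "(y / x) * (gx - g0) = (gx - g0) + ((gx - g0) / x) * (y - x)"
    using x by (simp add: field_simps)
  then have "gx + ((gx - g0) / x) * (y - x) \<le> gy" using h by simp
  then have "exp (- gy) \<le> exp (- gx + - ((gx - g0) / x) * (y - x))" by simp
  also have "exp (- gx + - ((gx - g0) / x) * (y - x)) = exp (- gx) * exp (- ((gx - g0) / x) * (y - x))"
    by (simp add: exp_add[symmetric])
  finally show ?thesis using gy by (simp add: exp_neg_def)
qed




lemma nn_exp_density_shift:
  assumes l: "0 < l"
  shows "(\<integral>\<^sup>+y. ennreal (exponential_density l (y - x)) \<partial>lborel) = 1"
proof -
  have "(\<integral>\<^sup>+z. ennreal (exponential_density l z) \<partial>lborel)
      = (\<integral>\<^sup>+y. ennreal (exponential_density l (y - x)) \<partial>lborel)"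
    using nn_integral_real_affine[of "\<lambda>z. ennreal (exponential_density l z)" 1 "-x"] by simp
  moreover have "(\<integral>\<^sup>+z. ennreal (exponential_density l z) \<partial>lborel) = 1"
    using nn_integral_erlang_ith_moment[OF l, where k=0 and i=0] by simp
  ultimately show ?thesis by simp
qed

locale gsetup =
  fixes g :: "real \<Rightarrow> ereal" and g0 :: real and \<sigma> :: "real measure"
  assumes conv: "ereal_convex g" and nm: "\<And>x. g x \<noteq> -\<infinity>" and g0: "g 0 = ereal g0"
    and gmin: "\<And>x. g 0 \<le> g x"
    and sig: "\<sigma> = density lborel (\<lambda>x. ennreal (exp_neg (g x)))"
    and prob: "prob_space \<sigma>"
begin

abbreviation "f x \<equiv> exp_neg (g x)"

lemma fm[measurable]: "(\<lambda>x. f x) \<in> borel_measurable borel"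
  by (rule f_meas[OF conv nm])

lemma f_le: "f x \<le> exp (- g0)"
  using exp_neg_anti[OF nm gmin, of x] g0 by (simp add: exp_neg_def)

lemma sets_sig[simp]: "sets \<sigma> = sets borel" unfolding sig by simp

lemma emeasure_sig: "S \<in> sets borel \<Longrightarrow> emeasure \<sigma> S = (\<integral>\<^sup>+x. ennreal (f x) * indicator S x \<partial>lborel)"
  unfolding sig by (subst emeasure_density) (auto simp: measurable_compose[OF fm])

lemma measure_le:
  assumes S: "S \<in> sets borel" and b: "emeasure \<sigma> S \<le> ennreal b" "b \<ge> 0"
  shows "measure \<sigma> S \<le> b"
proof -
  interpret prob_space \<sigma> by (rule prob)
  show ?thesis using b by (simp add: emeasure_eq_measure ennreal_le_iff)
qed

lemma tail_hazard:
  assumes x: "0 < x" and gx: "g x = ereal gx" and D: "gx - g0 > 0"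
  shows "measure \<sigma> {x<..} \<le> exp (- gx) * x / (gx - g0)"
proof -
  define l where "l = (gx - g0) / x"
  have l: "l > 0" using x D by (simp add: l_def)
  have "emeasure \<sigma> {x<..} = (\<integral>\<^sup>+y. ennreal (f y) * indicator {x<..} y \<partial>lborel)"
    by (rule emeasure_sig) simp
  also have "\<dots> \<le> (\<integral>\<^sup>+y. ennreal (exp (- gx) / l) * ennreal (exponential_density l (y - x)) \<partial>lborel)"
  proof (intro nn_integral_mono)
    fix y
    show "ennreal (f y) * indicator {x<..} y \<le> ennreal (exp (- gx) / l) * ennreal (exponential_density l (y - x))"
    proof (cases "x < y")
      case True
      have "f y \<le> exp (- gx) * exp (- l * (y - x))"
        using hazard_pt[OF conv nm g0 x _ gx, of y] True l_def by simp
      also have "\<dots> = (exp (- gx) / l) * exponential_density l (y - x)"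
        using True l by (simp add: exponential_density_def algebra_simps)
      finally show ?thesis using True l by (simp add: ennreal_mult[symmetric] ennreal_leI)
    qed auto
  qed
  also have "\<dots> = ennreal (exp (- gx) / l) * (\<integral>\<^sup>+y. ennreal (exponential_density l (y - x)) \<partial>lborel)"
    by (rule nn_integral_cmult) measurable
  also have "\<dots> = ennreal (exp (- gx) * x / (gx - g0))"
    using nn_exp_density_shift[OF l] l_def by simp
  finally show ?thesis using x D by (intro measure_le) auto
qed

lemma tail_inf:
  assumes x: "0 \<le> x" and gx: "g x = \<infinity>"
  shows "measure \<sigma> {x<..} = 0"
proof -
  have "emeasure \<sigma> {x<..} = (\<integral>\<^sup>+y. ennreal (f y) * indicator {x<..} y \<partial>lborel)"
    by (rule emeasure_sig) simp
  also have "\<dots> = 0"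
  proof -
    have h: "ennreal (f y) * indicator {x<..} y = 0" for y
    proof (cases "x < y")
      case True
      then have "g y = \<infinity>" using g_fin_prop[OF conv nm g0 x, of y] gx by auto
      then show ?thesis by (simp add: exp_neg_def)
    qed auto
    then have "(\<lambda>y. ennreal (f y) * indicator {x<..} y) = (\<lambda>y. 0)"
      by (intro ext) (rule h)
    then show ?thesis by simp
  qed
  finally show ?thesis by (simp add: measure_def)
qed

lemma tail_lipschitz:
  assumes "x \<le> y"
  shows "measure \<sigma> {x<..} - measure \<sigma> {y<..} \<le> exp (- g0) * (y - x)"
proof -
  interpret prob_space \<sigma> by (rule prob)
  have "measure \<sigma> {x<..} = measure \<sigma> ({x<..y} \<union> {y<..})"
    using assms by (intro arg_cong[where f="measure \<sigma>"]) auto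
  also have "\<dots> = measure \<sigma> {x<..y} + measure \<sigma> {y<..}"
    by (rule finite_measure_Union) auto
  finally have e: "measure \<sigma> {x<..} - measure \<sigma> {y<..} = measure \<sigma> {x<..y}" by simp
  have "emeasure \<sigma> {x<..y} = (\<integral>\<^sup>+z. ennreal (f z) * indicator {x<..y} z \<partial>lborel)"
    by (rule emeasure_sig) simp
  also have "\<dots> \<le> (\<integral>\<^sup>+z. ennreal (exp (- g0)) * indicator {x<..y} z \<partial>lborel)"
    by (intro nn_integral_mono) (auto simp: indicator_def f_le ennreal_leI)
  also have "\<dots> = ennreal (exp (- g0) * (y - x))"
    using assms by (subst nn_integral_cmult_indicator) (auto simp: ennreal_mult)
  finally have "measure \<sigma> {x<..y} \<le> exp (- g0) * (y - x)" using assms by (intro measure_le) auto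
  then show ?thesis using e by simp
qed

lemma tail_cont: "continuous_on S (\<lambda>x. measure \<sigma> {x<..})"
proof (rule lipschitz_on_continuous_on[of "exp (- g0)"], rule lipschitz_onI)
  fix x y assume "x \<in> S" "y \<in> S"
  interpret prob_space \<sigma> by (rule prob)
  have mono: "measure \<sigma> {b<..} \<le> measure \<sigma> {a<..}" if "a \<le> b" for a b
    using that by (intro finite_measure_mono) auto
  show "dist (measure \<sigma> {x<..}) (measure \<sigma> {y<..}) \<le> exp (- g0) * dist x y"
  proof (cases "x \<le> y")
    case True then show ?thesis using tail_lipschitz[OF True] mono[OF True]
      by (simp add: dist_real_def)
  next
    case False
    then have yx: "y \<le> x" by simp
    then show ?thesis using tail_lipschitz[OF yx] mono[OF yx]
      by (simp add: dist_real_def)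
  qed
qed (simp)

lemma tail_small: "q > 0 \<Longrightarrow> \<exists>b::real. b \<ge> 0 \<and> measure \<sigma> {b<..} \<le> q"
proof -
  assume q: "q > 0"
  interpret prob_space \<sigma> by (rule prob)
  have "(\<lambda>n. measure \<sigma> {real n<..}) \<longlonglongrightarrow> measure \<sigma> (\<Inter>n. {real n<..})"
    by (rule finite_Lim_measure_decseq) (auto simp: decseq_def)
  moreover have "(\<Inter>n. {real n<..}) = {}"
  proof -
    have "x \<notin> (\<Inter>n. {real n<..})" for x :: real
    proof -
      obtain n where "x < real n" using reals_Archimedean2 by blast
      then have "x \<notin> {real n<..}" by simp
      then show ?thesis by blast
    qed
    then show ?thesis by blast
  qed
  ultimately have "(\<lambda>n. measure \<sigma> {real n<..}) \<longlonglongrightarrow> 0" by simp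
  then have "eventually (\<lambda>n. measure \<sigma> {real n<..} < q) sequentially"
    using q by (rule order_tendstoD(2))
  then obtain n where "measure \<sigma> {real n<..} < q" by (auto simp: eventually_sequentially)
  then show ?thesis by (intro exI[of _ "real n"]) auto
qed

end




lemma ratio_fin:
  fixes \<delta> :: "real \<Rightarrow> ereal"
  assumes r: "\<delta> s / ereal s \<le> \<delta> t / ereal t" and s: "0 < s" and t: "0 < t" and dt: "\<delta> t = ereal dt"
    and nn: "\<delta> s \<ge> 0"
  shows "\<exists>ds. \<delta> s = ereal ds \<and> ds / s \<le> dt / t"
proof (cases "\<delta> s")
  case (real ds)
  then show ?thesis using r s t dt by (auto simp: ereal_divide)
next
  case PInf
  then show ?thesis using r s t dt by (simp add: ereal_divide)
next
  case MInf
  then show ?thesis using nn by simp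
qed

lemma (in gsetup) one_side:
  fixes \<delta> :: "real \<Rightarrow> ereal"
  assumes growth: "\<And>x. x \<ge> 0 \<Longrightarrow> \<delta> x \<le> g x - g 0"
    and dpos: "\<And>t. t > 0 \<Longrightarrow> \<delta> t > 0"
    and dmono: "\<And>s t. 0 < s \<Longrightarrow> s \<le> t \<Longrightarrow> \<delta> s / ereal s \<le> \<delta> t / ereal t"
    and ts: "ts > 0" and above: "\<And>t. t > ts \<Longrightarrow> ereal L < \<delta> t"
    and c2: "0 < c2" "c2 < 1" and L: "L > 0"
    and key: "(c2/2) * pt * L / ts \<le> exp (- g0) * exp (- c2 * L)"
    and q: "0 < q" "q \<le> pt / 2"
  shows "\<exists>a\<ge>0. measure \<sigma> {a<..} \<le> q \<and> q * c2 * L / ts \<le> f a"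
proof -
  have "q * c2 * L / ts \<le> (pt / 2) * c2 * L / ts"
    using q c2 L ts by (intro divide_right_mono mult_right_mono) auto
  also have "\<dots> = (c2/2) * pt * L / ts" by simp
  finally have b0: "q * c2 * L / ts \<le> exp (- g0) * exp (- c2 * L)" using key by simp
  show ?thesis
  proof (cases "measure \<sigma> {0<..} \<le> q")
    case True
    have "exp (- c2 * L) \<le> 1" using c2 L by simp
    then have "exp (- g0) * exp (- c2 * L) \<le> exp (- g0) * 1" by (intro mult_left_mono) auto
    then have "q * c2 * L / ts \<le> exp (- g0)" using b0 by linarith
    then have "q * c2 * L / ts \<le> f 0" using g0 by (simp add: exp_neg_def)
    then show ?thesis using True by (intro exI[of _ 0]) auto
  next
    case False
    obtain b where b: "b \<ge> 0" "measure \<sigma> {b<..} \<le> q" using tail_small[OF q(1)] by blast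
    obtain x where x: "0 \<le> x" "x \<le> b" "measure \<sigma> {x<..} = q"
      using IVT2'[of "\<lambda>x. measure \<sigma> {x<..}" b q 0] b False tail_cont by auto
    have x0: "x > 0" using x False by (cases "x = 0") auto
    have gxfin: "g x \<noteq> \<infinity>" using tail_inf[OF x(1)] x q by auto
    then obtain gx where gx: "g x = ereal gx" using nm by (cases "g x") auto
    have dx0: "\<delta> x > 0" using dpos x0 by simp
    have "\<delta> x \<le> ereal (gx - g0)" using growth[OF x(1)] gx g0 by simp
    then obtain dx where dx: "\<delta> x = ereal dx" "dx \<le> gx - g0" "dx > 0"
      using dx0 by (cases "\<delta> x") auto
    define D where "D = gx - g0"
    have D: "D > 0" "dx \<le> D" using dx D_def by auto
    have "q \<le> exp (- gx) * x / D" using tail_hazard[OF x0 gx] D x(3) D_def by simp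
    then have qD: "q * D / x \<le> exp (- gx)" using x0 D by (simp add: field_simps)
    have fx: "f x = exp (- gx)" using gx by (simp add: exp_neg_def)
    have goal: "q * c2 * L / ts \<le> exp (- gx)"
    proof (cases "x \<le> ts")
      case xts: True
      show ?thesis
      proof (cases "D < c2 * L")
        case True
        have "exp (- g0) * exp (- c2 * L) \<le> exp (- g0) * exp (- D)"
          using True by (intro mult_left_mono) auto
        also have "\<dots> = exp (- gx)" using D_def by (simp add: exp_add[symmetric])
        finally show ?thesis using b0 by simp
      next
        case False
        have "q * c2 * L / ts \<le> q * D / ts"
          using False q ts by (intro divide_right_mono mult_left_mono) auto
        also have "\<dots> \<le> q * D / x" using xts x0 q D by (intro divide_left_mono) auto
        finally show ?thesis using qD by simp
      qed
    next
      case False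
      define t where "t = min x (ts / c2)"
      have "ts / c2 > ts" using ts c2 by (simp add: field_simps)
      then have t: "t > ts" "t \<le> x" "t \<le> ts / c2" using False t_def by auto
      have t0: "t > 0" using t ts by simp
      obtain dt where dt: "\<delta> t = ereal dt" "dt / t \<le> dx / x"
        using ratio_fin[OF dmono[OF t0 t(2)] t0 x0 dx(1)] dpos[OF t0] less_imp_le by blast
      have "L < dt" using above[OF t(1)] dt by simp
      have "c2 * L / ts \<le> L / t"
      proof -
        have "t * c2 \<le> ts" using t(3) c2 by (simp add: field_simps)
        then have "t * (c2 * L) \<le> ts * L" using L by (metis mult.assoc mult.commute mult_right_mono less_imp_le)
        then show ?thesis using t0 ts by (simp add: field_simps)
      qed
      also have "\<dots> \<le> dt / t" using \<open>L < dt\<close> t0 by (simp add: divide_right_mono)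
      also have "\<dots> \<le> dx / x" by (rule dt(2))
      also have "\<dots> \<le> D / x" using D x0 by (simp add: divide_right_mono)
      finally have "q * (c2 * L / ts) \<le> q * (D / x)" using q by (intro mult_left_mono) auto
      then show ?thesis using qD by simp
    qed
    show ?thesis using x x0 goal fx by (intro exI[of _ x]) auto
  qed
qed




locale dsetup =
  fixes \<delta> :: "real \<Rightarrow> ereal"
  assumes dnn: "\<And>t. t \<ge> 0 \<Longrightarrow> \<delta> t \<ge> 0"
    and dpos: "\<And>t. t > 0 \<Longrightarrow> \<delta> t > 0"
    and dmono: "\<And>s t. 0 < s \<Longrightarrow> s \<le> t \<Longrightarrow> \<delta> s / ereal s \<le> \<delta> t / ereal t"
    and d0: "\<delta> 0 = 0"
begin

definition "phi t = indicator {0..} t * exp_neg (\<delta> t)"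

lemma phi_nn: "phi t \<ge> 0" unfolding phi_def by (simp add: exp_neg_nonneg)

lemma div_nn: "t > 0 \<Longrightarrow> \<delta> t / ereal t \<ge> 0"
  using dnn[of t] by (cases "\<delta> t") (auto simp: ereal_divide)

lemma phi_meas[measurable]: "phi \<in> borel_measurable borel"
proof -
  define w where "w t = (if t > 0 then exp_neg (\<delta> t / ereal t) else 1)" for t
  have w1: "w t \<le> 1" for t unfolding w_def using div_nn exp_neg_le1 by auto
  have "mono (\<lambda>t. - w t)"
  proof (rule monoI)
    fix s t :: real assume st: "s \<le> t"
    show "- w s \<le> - w t"
    proof (cases "s > 0")
      case True
      have "exp_neg (\<delta> t / ereal t) \<le> exp_neg (\<delta> s / ereal s)"
        using div_nn[OF True] dmono[OF True st] by (intro exp_neg_anti) auto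
      then show ?thesis using True st unfolding w_def by auto
    next
      case False then show ?thesis using w1[of t] unfolding w_def by auto
    qed
  qed
  then have "(\<lambda>t. - w t) \<in> borel_measurable borel" by (rule borel_measurable_mono)
  then have wm: "w \<in> borel_measurable borel" using borel_measurable_uminus[of "\<lambda>t. - w t"] by simp
  have eq: "phi t = (if t = 0 then 1 else if t > 0 then w t powr t else 0)" for t
  proof -
    consider "t = 0" | "t < 0" | "t > 0" by linarith
    then show ?thesis
    proof cases
      case 1 then show ?thesis by (simp add: phi_def d0 exp_neg_def)
    next
      case 2 then show ?thesis by (simp add: phi_def)
    next
      case 3
      show ?thesis
      proof (cases "\<delta> t")
        case (real d)
        have "exp (- (d / t)) powr t = exp (- d)" using 3
          by (simp add: powr_def)
        then show ?thesis using 3 real by (simp add: phi_def w_def exp_neg_def ereal_divide)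
      next
        case PInf then show ?thesis using 3 by (simp add: phi_def w_def exp_neg_def ereal_divide)
      next
        case MInf then show ?thesis using 3 dnn[of t] by simp
      qed
    qed
  qed
  have "(\<lambda>t. if t = 0 then 1 else if t > 0 then w t powr t else 0) \<in> borel_measurable borel"
    using wm by measurable
  then show ?thesis using eq by (simp add: fun_eq_iff[symmetric] eq[abs_def])
qed

lemma phi_bound_ge1:
  assumes t: "t \<ge> 1"
  shows "\<delta> t = \<infinity> \<or> (\<exists>d1 dt. \<delta> 1 = ereal d1 \<and> \<delta> t = ereal dt \<and> t * d1 \<le> dt)"
proof (cases "\<delta> t")
  case (real dt)
  obtain d1 where "\<delta> 1 = ereal d1" "d1 / 1 \<le> dt / t"
    using ratio_fin[OF dmono[OF _ t] _ _ real] t dnn[of 1] by auto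
  then show ?thesis using real t by (auto simp: field_simps)
next
  case PInf then show ?thesis by simp
next
  case MInf then show ?thesis using dnn[of t] t by simp
qed

lemma phi_finite: "(\<integral>\<^sup>+t. ennreal (phi t) \<partial>lborel) < top"
proof -
  define c where "c = (if \<delta> 1 = \<infinity> then 1 else real_of_ereal (\<delta> 1))"
  have c: "c > 0" using dpos[of 1] unfolding c_def by (cases "\<delta> 1") auto
  have pt: "ennreal (phi t) \<le> ennreal (indicator {0..1::real} t) + ennreal (exponential_density c t / c)" for t
  proof (cases "t \<le> 1")
    case True
    have "phi t \<le> indicator {0..1::real} t" using True exp_neg_le1[OF dnn, of t]
      by (auto simp: phi_def indicator_def)
    then have "ennreal (phi t) \<le> ennreal (indicator {0..1::real} t)" by (rule ennreal_leI)
    then show ?thesis by (rule order_trans) simp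
  next
    case False
    have t1: "1 \<le> t" using False by simp
    from phi_bound_ge1[OF t1] have "phi t \<le> exponential_density c t / c"
    proof (elim disjE exE conjE)
      assume "\<delta> t = \<infinity>" then show ?thesis using False c by (simp add: phi_def exp_neg_def exponential_density_def)
    next
      fix d1 dt assume h: "\<delta> 1 = ereal d1" "\<delta> t = ereal dt" "t * d1 \<le> dt"
      have "c = d1" using h c_def by simp
      then have "exp (- dt) \<le> exp (- t * c)" using h by simp
      then show ?thesis using False c h by (simp add: phi_def exp_neg_def exponential_density_def mult.commute)
    qed
    then have "ennreal (phi t) \<le> ennreal (exponential_density c t / c)" by (rule ennreal_leI)
    then show ?thesis by (rule order_trans) simp
  qed
  have "(\<integral>\<^sup>+t. ennreal (phi t) \<partial>lborel) \<le> (\<integral>\<^sup>+t. ennreal (indicator {0..1::real} t) + ennreal (exponential_density c t / c) \<partial>lborel)"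
    by (intro nn_integral_mono pt)
  also have "\<dots> = (\<integral>\<^sup>+t. ennreal (indicator {0..1::real} t) \<partial>lborel) + (\<integral>\<^sup>+t. ennreal (exponential_density c t / c) \<partial>lborel)"
    using nn_integral_add[of "\<lambda>t. ennreal (indicator {0..1::real} t)" lborel "\<lambda>t. ennreal (exponential_density c t / c)"] by simp
  also have "(\<integral>\<^sup>+t. ennreal (exponential_density c t / c) \<partial>lborel) = ennreal (1 / c) * (\<integral>\<^sup>+t. ennreal (exponential_density c t) \<partial>lborel)"
    using c by (subst nn_integral_cmult[symmetric]) (auto simp: ennreal_mult[symmetric] exponential_density_nonneg)
  also have "(\<integral>\<^sup>+t. ennreal (exponential_density c t) \<partial>lborel) = 1"
    using nn_exp_density_shift[OF c, of 0] by simp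
  also have "(\<integral>\<^sup>+t. ennreal (indicator {0..1::real} t) \<partial>lborel) = 1"
    by (simp add: ennreal_indicator)
  finally have le: "(\<integral>\<^sup>+t. ennreal (phi t) \<partial>lborel) \<le> 1 + ennreal (1 / c) * 1" .
  have "1 + ennreal (1 / c) * 1 = ennreal (1 + 1 / c)" using c by (simp add: ennreal_plus[symmetric])
  then have "1 + ennreal (1 / c) * 1 < top" by simp
  then show ?thesis using le by (rule le_less_trans[rotated])
qed

lemma phi_integrable: "integrable lborel phi"
  by (rule integrableI_nonneg) (auto simp: phi_nn phi_finite)

lemma M_eq: "(\<integral>\<^sup>+t. ennreal (phi t) \<partial>lborel) = ennreal (M_delta \<delta>)"
proof -
  have "M_delta \<delta> = integral\<^sup>L lborel phi"
    unfolding M_delta_def set_lebesgue_integral_def phi_def by simp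
  then show ?thesis using nn_integral_eq_integral[OF phi_integrable] phi_nn by simp
qed

end




lemma nn_reflect:
  fixes h :: "real \<Rightarrow> ennreal"
  assumes [measurable]: "h \<in> borel_measurable borel"
  shows "(\<integral>\<^sup>+x. h (- x) \<partial>lborel) = (\<integral>\<^sup>+x. h x \<partial>lborel)"
  using nn_integral_real_affine[of h "-1" 0] by simp

context gsetup
begin

lemma total: "(\<integral>\<^sup>+x. ennreal (f x) \<partial>lborel) = 1"
proof -
  interpret prob_space \<sigma> by (rule prob)
  have "emeasure \<sigma> UNIV = 1" using emeasure_space_1 sig by simp
  then show ?thesis using emeasure_sig[of UNIV] by simp
qed

lemma refl: "gsetup (\<lambda>x. g (-x)) g0 (density lborel (\<lambda>x. ennreal (exp_neg (g (-x)))))"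
proof -
  have c: "ereal_convex (\<lambda>x. g (- x))"
    unfolding ereal_convex_def
  proof (intro allI impI)
    fix x y t :: real assume t: "0 \<le> t \<and> t \<le> 1"
    have "- ((1 - t) * x + t * y) = (1 - t) * (- x) + t * (- y)" by (simp add: algebra_simps)
    then show "g (- ((1 - t) * x + t * y)) \<le> ereal (1 - t) * g (- x) + ereal t * g (- y)"
      using conv t unfolding ereal_convex_def by metis
  qed
  have p: "prob_space (density lborel (\<lambda>x. ennreal (exp_neg (g (- x)))))"
  proof
    have "(\<integral>\<^sup>+x. ennreal (f (- x)) \<partial>lborel) = 1"
      using nn_reflect[of "\<lambda>x. ennreal (f x)"] total by simp
    then show "emeasure (density lborel (\<lambda>x. ennreal (exp_neg (g (- x)))))
        (space (density lborel (\<lambda>x. ennreal (exp_neg (g (- x)))))) = 1"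
      by (simp add: emeasure_density)
  qed
  show ?thesis unfolding gsetup_def using c p nm g0 gmin by auto
qed

lemma refl_tail: "measure (density lborel (\<lambda>x. ennreal (exp_neg (g (-x))))) {a<..} = measure \<sigma> {..< -a}"
proof -
  have "emeasure (density lborel (\<lambda>x. ennreal (exp_neg (g (-x))))) {a<..}
      = (\<integral>\<^sup>+x. ennreal (f (- x)) * indicator {a<..} x \<partial>lborel)"
    by (simp add: emeasure_density)
  also have "\<dots> = (\<integral>\<^sup>+x. (\<lambda>y. ennreal (f y) * indicator {..< -a} y) (- x) \<partial>lborel)"
    by (intro nn_integral_cong) (auto simp: indicator_def)
  also have "\<dots> = (\<integral>\<^sup>+x. ennreal (f x) * indicator {..< -a} x \<partial>lborel)"
    by (rule nn_reflect) measurable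
  also have "\<dots> = emeasure \<sigma> {..< -a}" by (rule emeasure_sig[symmetric]) simp
  finally show ?thesis by (simp add: measure_def)
qed

lemma mass_M:
  assumes ds: "dsetup \<delta>" and growth: "\<And>x. \<delta> \<bar>x\<bar> \<le> g x - g 0"
  shows "1 \<le> 2 * exp (- g0) * M_delta \<delta>"
proof -
  interpret dsetup \<delta> by (rule ds)
  define f0 where "f0 = exp (- g0)"
  have pt: "f x \<le> f0 * exp_neg (\<delta> \<bar>x\<bar>)" for x
  proof (cases "g x")
    case (real r)
    have "\<delta> \<bar>x\<bar> \<le> ereal (r - g0)" using growth[of x] real g0 by simp
    moreover have "\<delta> \<bar>x\<bar> \<ge> 0" using dnn by simp
    ultimately obtain d where d: "\<delta> \<bar>x\<bar> = ereal d" "d \<le> r - g0" by (cases "\<delta> \<bar>x\<bar>") auto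
    have "exp (- r) \<le> exp (- g0 + - d)" using d by simp
    then show ?thesis using real d by (simp add: f0_def exp_neg_def mult_exp_exp)
  next
    case PInf then show ?thesis by (simp add: exp_neg_def f0_def exp_neg_nonneg)
  next
    case MInf then show ?thesis using nm by simp
  qed
  have "1 = (\<integral>\<^sup>+x. ennreal (f x) \<partial>lborel)" using total by simp
  also have "\<dots> = (\<integral>\<^sup>+x. ennreal (f x) * indicator {0..} x + ennreal (f x) * indicator {..<0} x \<partial>lborel)"
    by (intro nn_integral_cong) (auto simp: indicator_def)
  also have "\<dots> = (\<integral>\<^sup>+x. ennreal (f x) * indicator {0..} x \<partial>lborel) + (\<integral>\<^sup>+x. ennreal (f x) * indicator {..<0} x \<partial>lborel)"
    by (rule nn_integral_add) measurable
  also have "(\<integral>\<^sup>+x. ennreal (f x) * indicator {0..} x \<partial>lborel) \<le> (\<integral>\<^sup>+x. ennreal f0 * ennreal (phi x) \<partial>lborel)"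
    by (intro nn_integral_mono)
       (auto simp: indicator_def phi_def ennreal_mult[symmetric] f0_def exp_neg_nonneg intro!: ennreal_leI pt[THEN order_trans])
  also have "(\<integral>\<^sup>+x. ennreal (f x) * indicator {..<0} x \<partial>lborel) \<le> (\<integral>\<^sup>+x. ennreal f0 * ennreal (phi (- x)) \<partial>lborel)"
    by (intro nn_integral_mono)
       (auto simp: indicator_def phi_def ennreal_mult[symmetric] f0_def exp_neg_nonneg intro!: ennreal_leI pt[THEN order_trans])
  also have "(\<integral>\<^sup>+x. ennreal f0 * ennreal (phi (- x)) \<partial>lborel) = (\<integral>\<^sup>+x. ennreal f0 * ennreal (phi x) \<partial>lborel)"
    by (rule nn_reflect[of "\<lambda>x. ennreal f0 * ennreal (phi x)"]) measurable
  also have "(\<integral>\<^sup>+x. ennreal f0 * ennreal (phi x) \<partial>lborel) = ennreal f0 * ennreal (M_delta \<delta>)"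
    by (subst nn_integral_cmult) (auto simp: M_eq)
  finally have le: "1 \<le> ennreal f0 * ennreal (M_delta \<delta>) + ennreal f0 * ennreal (M_delta \<delta>)"
    by (auto intro: add_mono)
  have Mnn: "M_delta \<delta> \<ge> 0" unfolding M_delta_def set_lebesgue_integral_def
    by (rule integral_nonneg_AE) (auto simp: exp_neg_nonneg)
  have f0nn: "f0 \<ge> 0" by (simp add: f0_def)
  have "ennreal f0 * ennreal (M_delta \<delta>) + ennreal f0 * ennreal (M_delta \<delta>) = ennreal (2 * f0 * M_delta \<delta>)"
    using Mnn f0nn by (simp add: ennreal_mult[symmetric] ennreal_plus[symmetric] del: ennreal_plus)
  then have "ennreal 1 \<le> ennreal (2 * f0 * M_delta \<delta>)" using le by simp
  then show ?thesis unfolding f0_def using Mnn by (subst (asm) ennreal_le_iff) auto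
qed

end




lemma L_exp_bound: "L \<ge> 0 \<Longrightarrow> L * exp (- L / exp 1) \<le> (1::real)"
proof -
  assume L: "L \<ge> 0"
  have "1 + (L / exp 1 - 1) \<le> exp (L / exp 1 - 1)" by (rule exp_ge_add_one_self)
  then have "L / exp 1 \<le> exp (L / exp 1) / exp 1" by (simp add: exp_diff)
  then have "L \<le> exp (L / exp 1)" by (simp add: divide_right_mono_neg field_simps)
  then have "L * exp (- L / exp 1) \<le> exp (L / exp 1) * exp (- L / exp 1)"
    by (intro mult_right_mono) auto
  also have "\<dots> = 1" by (simp add: mult_exp_exp)
  finally show ?thesis .
qed

lemma key_ineq:
  fixes f0 M dM L pt ts \<mu> c2 :: real
  assumes f0: "f0 > 0" and M: "M > 0" and mass: "1 \<le> 2 * f0 * M" and dM: "dM > 0" and L: "L > 0"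
    and pt: "pt = exp (- L)" and mu: "\<mu> = max dM 1" and c2: "c2 = (exp 1 - 1) / (exp 1 * \<mu>)"
    and ts: "ts > 0" "ts \<ge> (if dM \<le> L then M else M * L / dM)"
  shows "(c2/2) * pt * L / ts \<le> f0 * exp (- c2 * L)"
proof -
  have e1: "exp 1 > (1::real)" by simp
  have mu1: "\<mu> \<ge> 1" "\<mu> \<ge> dM" using mu by auto
  have c2pos: "c2 > 0" using c2 mu1 e1 by (auto intro!: divide_pos_pos)
  have c2le: "c2 \<le> (exp 1 - 1) / exp 1"
    unfolding c2 using mu1 e1 by (intro divide_left_mono) (auto simp: mult_le_cancel_left1)
  then have c2le': "c2 \<le> 1 - 1 / exp 1" by (simp add: diff_divide_distrib)
  have c2dM: "c2 * dM \<le> 1"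
  proof -
    have "c2 * dM \<le> c2 * \<mu>" using mu1 c2pos by (intro mult_left_mono) auto
    also have "\<dots> = (exp 1 - 1) / exp 1" unfolding c2 using mu1 by (simp add: field_simps)
    also have "\<dots> \<le> 1" by simp
    finally show ?thesis .
  qed
  define E where "E = exp (- c2 * L)"
  define X where "X = exp (- (1 - c2) * L)"
  have E: "E > 0" unfolding E_def by simp
  have ptXE: "pt = X * E" unfolding pt X_def E_def by (simp add: mult_exp_exp algebra_simps)
  have c2lt: "c2 < 1" using c2le' by (smt (verit) exp_gt_zero divide_pos_pos)
  have "(c2 - 1) * L \<le> 0" using c2lt L by (intro mult_nonpos_nonneg) auto
  then have X1: "X \<le> 1" unfolding X_def by (simp add: algebra_simps)
  have X0: "X \<ge> 0" unfolding X_def by simp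
  have main: "c2 * L * X \<le> 2 * f0 * ts"
  proof (cases "dM \<le> L")
    case True
    have tsM: "ts \<ge> M" using ts True by simp
    have "L * (c2 + 1 / exp 1) \<le> L * 1" using c2le' L by (intro mult_left_mono) auto
    then have "- (1 - c2) * L \<le> - L / exp 1" by (simp add: algebra_simps)
    then have "X \<le> exp (- L / exp 1)" unfolding X_def by simp
    have "c2 * L * X \<le> 1 * L * X" using c2lt L X0 by (intro mult_right_mono) auto
    also have "\<dots> \<le> L * exp (- L / exp 1)" using \<open>X \<le> exp (- L / exp 1)\<close> L by simp
    also have "\<dots> \<le> 1" using L by (intro L_exp_bound) simp
    also have "\<dots> \<le> 2 * f0 * M" by (rule mass)
    also have "\<dots> \<le> 2 * f0 * ts" using tsM f0 by simp
    finally show ?thesis .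
  next
    case False
    have tsM: "ts \<ge> M * L / dM" using ts False by simp
    have "c2 * L * X \<le> c2 * L" using X1 c2pos L by (simp add: mult_left_le)
    also have "\<dots> = (c2 * dM) * (L / dM)" using dM by simp
    also have "\<dots> \<le> 1 * (L / dM)" using c2dM L dM by (intro mult_right_mono) auto
    also have "\<dots> \<le> (2 * f0 * M) * (L / dM)" using mass L dM by (intro mult_right_mono) auto
    also have "\<dots> = 2 * f0 * (M * L / dM)" by simp
    also have "\<dots> \<le> 2 * f0 * ts" using tsM f0 by (intro mult_left_mono) auto
    finally show ?thesis .
  qed
  have "(c2/2) * pt * L / ts = (c2 * L * X) * E / (2 * ts)" using ptXE by simp
  also have "\<dots> \<le> (2 * f0 * ts) * E / (2 * ts)" using main E ts
    by (intro divide_right_mono mult_right_mono) auto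
  also have "\<dots> = f0 * E" using ts by simp
  finally show ?thesis unfolding E_def .
qed




theorem mainTheorem13:
  fixes \<delta> :: "real \<Rightarrow> ereal" and g :: "real \<Rightarrow> ereal" and \<sigma> :: "real measure"
    and A :: "real set"
  assumes delta_nonneg: "\<And>t. t \<ge> 0 \<Longrightarrow> \<delta> t \<ge> 0"
    and delta_pos: "\<And>t. t > 0 \<Longrightarrow> \<delta> t > 0"
    and delta_ratio_mono: "\<And>s t. 0 < s \<Longrightarrow> s \<le> t \<Longrightarrow> \<delta> s / ereal s \<le> \<delta> t / ereal t"
    and g_not_minf: "\<And>x. g x \<noteq> -\<infinity>"
    and g_convex: "ereal_convex g"
    and g_min: "\<And>x. g 0 \<le> g x"
    and g_growth: "\<And>x. g x - g 0 \<ge> \<delta> \<bar>x\<bar>"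
    and sigma_def: "\<sigma> = density lborel (\<lambda>x. ennreal (exp_neg (g x)))"
    and sigma_prob: "prob_space \<sigma>"
    and A_borel: "A \<in> sets borel"
  shows "boundary_measure \<sigma> A \<ge>
    C_delta \<delta> * ereal (min (measure \<sigma> A) (1 - measure \<sigma> A))
      * gamma_fun \<delta> (ln (1 / min (measure \<sigma> A) (1 - measure \<sigma> A)))"
proof -
  define p where "p = measure \<sigma> A"
  define pt where "pt = min p (1 - p)"
  define L where "L = ln (1 / pt)"
  interpret P: prob_space \<sigma> by (rule sigma_prob)
  have sets_eq: "sets \<sigma> = sets borel" using sigma_def by simp
  have bnn: "0 \<le> boundary_measure \<sigma> A" by (rule bnd_nonneg[OF sigma_def sigma_prob A_borel])
  have g0fin: "g 0 \<noteq> \<infinity>"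
  proof
    assume h: "g 0 = \<infinity>"
    then have ginf: "g x = \<infinity>" for x using g_min[of x] by simp
    have fm: "(\<lambda>x. ennreal (exp_neg (g x))) \<in> borel_measurable borel"
      by (rule measurable_compose[OF f_meas[OF g_convex g_not_minf]]) simp
    have "emeasure \<sigma> UNIV = (\<integral>\<^sup>+x. ennreal (exp_neg (g x)) * indicator UNIV x \<partial>lborel)"
      unfolding sigma_def by (subst emeasure_density) (auto simp: fm)
    also have "\<dots> = 0" by (simp add: ginf exp_neg_def)
    finally have e0: "emeasure \<sigma> UNIV = 0" .
    have "space \<sigma> = UNIV" by (simp add: sigma_def)
    then have "emeasure \<sigma> UNIV = 1" using P.emeasure_space_1 by simp
    then show False using e0 by simp
  qed
  obtain g0 where g0: "g 0 = ereal g0" using g0fin g_not_minf by (cases "g 0") auto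
  interpret G: gsetup g g0 \<sigma>
    by (intro gsetup.intro g_convex g_not_minf g0 g_min sigma_def sigma_prob)
  have d0: "\<delta> 0 = 0"
  proof -
    have "\<delta> 0 \<le> g 0 - g 0" using g_growth[of 0] by simp
    then have "\<delta> 0 \<le> 0" using g0 by simp
    then show ?thesis using delta_nonneg[of 0] by simp
  qed
  interpret D: dsetup \<delta> by (intro dsetup.intro delta_nonneg delta_pos delta_ratio_mono d0)
  have p01: "0 \<le> p" "p \<le> 1" unfolding p_def by auto
  have pt0: "pt \<ge> 0" "pt \<le> 1/2" unfolding pt_def using p01 by (auto simp: min_def)
  have goal: "C_delta \<delta> * ereal pt * gamma_fun \<delta> L \<le> boundary_measure \<sigma> A"
  proof (cases "pt > 0 \<and> \<delta> (M_delta \<delta>) \<noteq> \<infinity>")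
    case False
    then have "pt = 0 \<or> \<delta> (M_delta \<delta>) = \<infinity>" using pt0 by auto
    then have z: "C_delta \<delta> * ereal pt * gamma_fun \<delta> L = 0"
    proof
      assume "pt = 0" then show ?thesis by simp
    next
      assume "\<delta> (M_delta \<delta>) = \<infinity>"
      then have "C_delta \<delta> = 0" unfolding C_delta_def by simp
      then show ?thesis by simp
    qed
    show ?thesis unfolding z by (rule bnn)
  next
    case True
    then have ptpos: "pt > 0" by simp
    define M where "M = M_delta \<delta>"
    have mass: "1 \<le> 2 * exp (- g0) * M" unfolding M_def
      by (rule G.mass_M[OF D.dsetup_axioms]) (use g_growth in simp)
    have Mpos: "M > 0"
    proof (rule ccontr)
      assume "\<not> M > 0"
      then have "2 * exp (- g0) * M \<le> 0" by (simp add: mult_nonneg_nonpos)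
      then show False using mass by linarith
    qed
    obtain dM where dM: "\<delta> M = ereal dM" using True delta_nonneg[of M] Mpos M_def by (cases "\<delta> M") auto
    have dMpos: "dM > 0" using delta_pos[OF Mpos] dM by simp
    have Lpos: "L > 0" unfolding L_def using ptpos pt0 by simp
    have ptL: "pt = exp (- L)" unfolding L_def using ptpos by (simp add: ln_div)
    define S where "S = {ereal t | t. t \<ge> 0 \<and> \<delta> t \<le> ereal L}"
    define t1 where "t1 = (if dM \<le> L then M else M * L / dM)"
    have t1pos: "t1 > 0" unfolding t1_def using Mpos Lpos dMpos by auto
    have t1S: "ereal t1 \<in> S"
    proof (cases "dM \<le> L")
      case True then show ?thesis using dM Mpos unfolding S_def t1_def by auto
    next
      case False
      have t1M: "t1 \<le> M" unfolding t1_def using False Mpos dMpos Lpos by (auto simp: field_simps)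
      obtain d1 where d1: "\<delta> t1 = ereal d1" "d1 / t1 \<le> dM / M"
        using ratio_fin[OF delta_ratio_mono[OF t1pos t1M] t1pos Mpos dM] delta_nonneg[of t1] t1pos by auto
      have "d1 \<le> t1 * (dM / M)" using d1(2) t1pos by (simp add: field_simps)
      also have "t1 * (dM / M) = L" unfolding t1_def using False Mpos dMpos by simp
      finally show ?thesis using d1 t1pos unfolding S_def by auto
    qed
    define B where "B = max M (L * M / dM)"
    have Sb: "s \<le> ereal B" if sS: "s \<in> S" for s
    proof -
      obtain t where t: "s = ereal t" "t \<ge> 0" "\<delta> t \<le> ereal L" using sS S_def by auto
      show ?thesis
      proof (cases "t \<le> M")
        case True
        then have "t \<le> B" unfolding B_def by simp
        then show ?thesis using t(1) by simp
      next
        case False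
        obtain dt where dt: "\<delta> t = ereal dt" using t(3) delta_nonneg[OF t(2)] by (cases "\<delta> t") auto
        obtain dM' where "\<delta> M = ereal dM'" "dM' / M \<le> dt / t"
          using ratio_fin[OF delta_ratio_mono[OF Mpos] Mpos _ dt] False Mpos delta_nonneg[of M] by auto
        then have r: "dM / M \<le> dt / t" using dM by simp
        have "t * dM \<le> dt * M" using r False Mpos by (simp add: field_simps)
        also have "\<dots> \<le> L * M" using t(3) dt Mpos by (intro mult_right_mono) auto
        finally have "t \<le> L * M / dM" using dMpos by (simp add: field_simps)
        then have "t \<le> B" unfolding B_def by simp
        then show ?thesis using t(1) by simp
      qed
    qed
    have sup_ge: "ereal t1 \<le> Sup S" using t1S by (rule Sup_upper)
    have sup_le: "Sup S \<le> ereal B" using Sb by (rule Sup_least)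
    define ts where "ts = real_of_ereal (Sup S)"
    have supeq: "Sup S = ereal ts" unfolding ts_def using sup_ge sup_le
      by (cases "Sup S") auto
    have tsge: "ts \<ge> t1" using sup_ge supeq by simp
    have tspos: "ts > 0" using tsge t1pos by simp
    have above: "ereal L < \<delta> t" if "t > ts" for t
    proof (rule ccontr)
      assume "\<not> ereal L < \<delta> t"
      then have "ereal t \<in> S" unfolding S_def using that tspos by (auto simp: not_less)
      then have "ereal t \<le> Sup S" by (rule Sup_upper)
      then show False using supeq that by simp
    qed
    have dinv: "delta_inv \<delta> L = ereal ts" unfolding delta_inv_def using supeq S_def by simp
    define \<mu> where "\<mu> = max dM 1"
    define c2 where "c2 = (exp 1 - 1) / (exp 1 * \<mu>)"
    have mu1: "\<mu> \<ge> 1" unfolding \<mu>_def by simp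
    have Cd: "C_delta \<delta> = ereal (c2 / 2)"
    proof -
      have "max (\<delta> (M_delta \<delta>)) 1 = ereal \<mu>" using dM M_def \<mu>_def by (simp add: max_def)
      then have "C_delta \<delta> = ereal ((exp 1 - 1) / (2 * exp 1)) / ereal \<mu>" unfolding C_delta_def by simp
      also have "\<dots> = ereal ((exp 1 - 1) / (2 * exp 1) / \<mu>)" using mu1 by (simp add: ereal_divide)
      also have "(exp 1 - 1) / (2 * exp 1) / \<mu> = c2 / 2" unfolding c2_def by (simp add: field_simps)
      finally show ?thesis .
    qed
    have gam: "gamma_fun \<delta> L = ereal (L / ts)"
      unfolding gamma_fun_def dinv using tspos by (simp add: ereal_divide)
    define R where "R = (c2 / 2) * pt * (L / ts)"
    have rhs: "C_delta \<delta> * ereal pt * gamma_fun \<delta> L = ereal R" unfolding Cd gam R_def by simp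
    have e1: "exp 1 > (1::real)" by simp
    have c2pos: "c2 > 0" unfolding c2_def using mu1 e1 by (auto intro!: divide_pos_pos)
    have c2lt: "c2 < 1"
    proof -
      have "c2 \<le> (exp 1 - 1) / exp 1"
        unfolding c2_def using mu1 e1 by (intro divide_left_mono) (auto simp: mult_le_cancel_left1)
      also have "\<dots> < 1" by simp
      finally show ?thesis .
    qed
    have key: "(c2/2) * pt * L / ts \<le> exp (- g0) * exp (- c2 * L)"
      by (rule key_ineq[OF _ Mpos mass dMpos Lpos ptL \<mu>_def c2_def tspos]) (use tsge t1_def in auto)
    have growth_r: "\<delta> x \<le> g x - g 0" if "x \<ge> 0" for x using g_growth[of x] that by simp
    interpret G': gsetup "\<lambda>x. g (-x)" g0 "density lborel (\<lambda>x. ennreal (exp_neg (g (-x))))"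
      by (rule G.refl)
    have growth_l: "\<delta> x \<le> g (- x) - g (- 0)" if "x \<ge> 0" for x using g_growth[of "-x"] that by simp
    have "ereal R \<le> boundary_measure \<sigma> A"
    proof (rule ereal_le_mult_one_interval)
      show "boundary_measure \<sigma> A \<noteq> - \<infinity>" using bnn by auto
      fix z :: ereal assume z: "0 < z" "z < 1"
      then obtain zr where zr: "z = ereal zr" "0 < zr" "zr < 1" by (cases z) auto
      define q where "q = zr * pt / 2"
      have q: "0 < q" "q \<le> pt / 2" unfolding q_def using zr ptpos by (auto simp: field_simps)
      obtain a2 where a2: "a2 \<ge> 0" "measure \<sigma> {a2<..} \<le> q" "q * c2 * L / ts \<le> exp_neg (g a2)"
        using G.one_side[of \<delta> ts L c2 pt q, OF growth_r delta_pos delta_ratio_mono tspos above c2pos c2lt Lpos key q]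
        by blast
      obtain a1 where a1: "a1 \<ge> 0" "measure (density lborel (\<lambda>x. ennreal (exp_neg (g (-x))))) {a1<..} \<le> q"
          "q * c2 * L / ts \<le> exp_neg (g (- a1))"
        using G'.one_side[of \<delta> ts L c2 pt q, OF growth_l delta_pos delta_ratio_mono tspos above c2pos c2lt Lpos key q]
        by blast
      have a1': "measure \<sigma> {..< -a1} \<le> q" using a1(2) G.refl_tail by simp
      define m where "m = q * c2 * L / ts"
      have m: "zr * R = m" unfolding m_def R_def q_def by (simp add: field_simps)
      have m0: "m \<ge> 0" unfolding m_def using q c2pos Lpos tspos by simp
      have mK: "m \<le> exp_neg (g y)" if "y \<in> {-a1..a2}" for y
        using f_quasi[OF g_convex g_not_minf, of "-a1" y a2] that a1(3) a2(3) m_def by auto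
      have UN: "UNIV = {..< -a1} \<union> ({-a1..a2} \<union> {a2<..})" using a1 a2 by auto
      have "1 = measure \<sigma> UNIV" using P.prob_space sigma_def by simp
      also have "\<dots> = measure \<sigma> {..< -a1} + (measure \<sigma> {-a1..a2} + measure \<sigma> {a2<..})"
        unfolding UN
        using a1(1) a2(1)
        by (subst P.finite_measure_Union; (subst P.finite_measure_Union)?) (auto simp: sets_eq)
      finally have meq: "measure \<sigma> {-a1..a2} = 1 - measure \<sigma> {..< -a1} - measure \<sigma> {a2<..}" by simp
      have "measure \<sigma> {-a1..a2} \<ge> 1 - 2 * q" using meq a1' a2(2) by simp
      moreover have "1 - 2 * q > 1 - pt" unfolding q_def using zr ptpos by (simp add: field_simps)
      ultimately have Kbig: "measure \<sigma> {-a1..a2} > 1 - pt" by simp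
      have K1: "measure \<sigma> {-a1..a2} > measure \<sigma> A" using Kbig pt_def p_def by simp
      have K2: "measure \<sigma> {-a1..a2} > 1 - measure \<sigma> A" using Kbig pt_def p_def by simp
      have "ereal m \<le> boundary_measure \<sigma> A"
        by (rule bnd_lower[OF sigma_def sigma_prob G.fm A_borel _ m0 mK K1 K2]) (use a1 a2 in auto)
      then show "z * ereal R \<le> boundary_measure \<sigma> A" using zr m by simp
    qed
    then show ?thesis using rhs by simp
  qed
  then show ?thesis unfolding L_def pt_def p_def by simp
qed


end
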